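(* Let $n\ge 2$, let $\mathcal{L}\subset\mathbb{R}^n$ be a tame lattice with Lagrangian basis $\{\mathbf{e}_1,\dots,\mathbf{e}_n\}$, $\mathbf{v}_1=\sum_i\mathbf{e}_i$, $a:=\langle\mathbf{e}_1,\mathbf{e}_1\rangle$, $h:=-\langle\mathbf{e}_1,\mathbf{e}_2\rangle$. Let $r,s$ be integers with $0\ne|r|<n$ and suppose $s=rh$. Then the dual lattice of $\mathcal{L}_{\mathbf{v}_1}^{(r,s)}$ equals $\frac{1}{r(a+h)}\mathcal{L}$.
   Context: Tame lattice: a full-rank lattice $\mathcal{L}\subset\mathbb{R}^n$ with a basis $\{\mathbf{e}_1,\dots,\mathbf{e}_n\}$ (Lagrangian basis) and nonzero $\mathbf{v}_1\in\mathcal{L}\cap\mathcal{L}^*$ such that $\sum_i\mathbf{e}_i=\mathbf{v}_1$, $\langle\mathbf{e}_i,\mathbf{v}_1\rangle=1$, $\langle\mathbf{e}_i,\mathbf{e}_i\rangle=a$, $\langle\mathbf{e}_i,\mathbf{e}_j\rangle=-h$ ($i\ne j$); then $a-h(n-1)=1$ and $a+h>0$. $\mathcal{L}^{(r,s)}_{\mathbf{v}_1}$ is the image of $\mathcal{L}$ under $\mathbf{x}\mapsto r\mathbf{x}+s\langle\mathbf{x},\mathbf{v}_1\rangle\mathbf{v}_1$. The dual of a lattice $\Lambda\subset\mathbb{R}^n$ is $\Lambda^*=\{\mathbf{v}:\langle\mathbf{v},\mathbf{x}\rangle\in\mathbb{Z}\ \forall\mathbf{x}\in\Lambda\}$. 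*)

theory Defs
  imports "HOL-Analysis.Analysis"
begin

definition lattice_gen :: "('n::finite \<Rightarrow> real^'n) \<Rightarrow> (real^'n) set" where
  "lattice_gen e = {x. \<exists>c. (\<forall>i. c i \<in> \<int>) \<and> x = (\<Sum>i\<in>UNIV. c i *\<^sub>R e i)}"

definition dual_lattice :: "(real^'n) set \<Rightarrow> (real^'n) set" where
  "dual_lattice \<Lambda> = {v. \<forall>x\<in>\<Lambda>. inner v x \<in> \<int>}"

definition tame_lagrangian_basis :: "('n::finite \<Rightarrow> real^'n) \<Rightarrow> real \<Rightarrow> real \<Rightarrow> bool" where
  "tame_lagrangian_basis e a h \<longleftrightarrow>
     inj e \<and> independent (range e) \<and>
     (let v1 = (\<Sum>i\<in>UNIV. e i) in
        v1 \<noteq> 0 \<and> v1 \<in> lattice_gen e \<and> v1 \<in> dual_lattice (lattice_gen e) \<and>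
        (\<forall>i. inner (e i) v1 = 1) \<and>
        (\<forall>i. inner (e i) (e i) = a) \<and>
        (\<forall>i j. i \<noteq> j \<longrightarrow> inner (e i) (e j) = - h))"

definition rs_map :: "real \<Rightarrow> real \<Rightarrow> real^'n \<Rightarrow> real^'n \<Rightarrow> real^'n" where
  "rs_map r s v1 x = r *\<^sub>R x + (s * inner x v1) *\<^sub>R v1"

end

theory Submission imports Defs begin
lemma spanUNIV: fixes e :: "'n::finite \<Rightarrow> real^'n"
  assumes "inj e" "independent (range e)"
  shows "span (range e) = UNIV"
proof -
  have "card (range e) = CARD('n)" using assms(1) by (simp add: card_image)
  hence "card (range e) = dim (UNIV :: (real^'n) set)" by simp
  hence "UNIV \<subseteq> span (range e)" using card_eq_dim[of "range e" UNIV] assms(2) by auto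
  thus ?thesis by auto
qed
lemma reprs: fixes e :: "'n::finite \<Rightarrow> real^'n"
  assumes "inj e" "independent (range e)"
  shows "\<exists>u. y = (\<Sum>i\<in>UNIV. u i *\<^sub>R e i)"
proof -
  have "y \<in> span (range e)" using spanUNIV[OF assms] by simp
  then obtain u where "(\<Sum>v\<in>range e. u v *\<^sub>R v) = y" by (auto simp: span_finite)
  moreover have "(\<Sum>v\<in>range e. u v *\<^sub>R v) = (\<Sum>i\<in>UNIV. u (e i) *\<^sub>R e i)"
    by (simp add: sum.reindex[OF assms(1)])
  ultimately show ?thesis by metis
qed

theorem mainTheorem9:
  fixes e :: "'n::finite \<Rightarrow> real^'n" and a h :: real and r s :: int
  assumes "CARD('n) \<ge> 2"
    and "tame_lagrangian_basis e a h"
    and "r \<noteq> 0" and "\<bar>r\<bar> < int CARD('n)"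
    and "real_of_int s = real_of_int r * h"
  shows "dual_lattice (rs_map (real_of_int r) (real_of_int s) (\<Sum>i\<in>UNIV. e i) ` lattice_gen e)
         = (\<lambda>x. (1 / (real_of_int r * (a + h))) *\<^sub>R x) ` lattice_gen e"
proof -
  define v1 where "v1 = (\<Sum>i\<in>UNIV. e i)"
  define T where "T = rs_map (real_of_int r) (real_of_int s) v1"
  define k where "k = real_of_int r * (a + h)"
  have inj: "inj e" and ind: "independent (range e)" and ev: "\<And>i. inner (e i) v1 = 1"
    and ea: "\<And>i. inner (e i) (e i) = a" and eh: "\<And>i j. i \<noteq> j \<Longrightarrow> inner (e i) (e j) = - h"
    using assms(2) unfolding tame_lagrangian_basis_def v1_def Let_def by auto
  obtain i0 j0 :: 'n where ij: "i0 \<noteq> j0"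
  proof -
    have "\<not> (\<forall>i j::'n. i = j)"
    proof
      assume "\<forall>i j::'n. i = j"
      hence "CARD('n) \<le> Suc 0" by (subst card_le_Suc0_iff_eq) auto
      thus False using assms(1) by simp
    qed
    thus ?thesis using that by blast
  qed
  have "0 < inner (e i0 - e j0) (e i0 - e j0)"
    using inj ij by (simp add: inj_eq)
  also have "\<dots> = 2 * a + 2 * h" using ea eh[OF ij] eh[OF ij[symmetric]]
    by (simp add: inner_diff_left inner_diff_right inner_commute)
  finally have ah: "a + h > 0" by simp
  have k0: "k \<noteq> 0" unfolding k_def using ah assms(3) by simp
  have Te: "T (e i) = real_of_int r *\<^sub>R e i + real_of_int s *\<^sub>R v1" for i
    unfolding T_def rs_map_def using ev by simp
  have key: "inner (e j) (T (e i)) = (if i = j then k else 0)" for i j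
    unfolding Te k_def using ea eh[of j i] ev[of j] assms(5)
    by (auto simp: inner_add_right algebra_simps)
  have Tsum: "T (\<Sum>i\<in>UNIV. c i *\<^sub>R e i) = (\<Sum>i\<in>UNIV. c i *\<^sub>R T (e i))" for c
  proof -
    have "inner (\<Sum>i\<in>UNIV. c i *\<^sub>R e i) v1 = (\<Sum>i\<in>UNIV. c i)"
      by (simp add: inner_sum_left ev)
    thus ?thesis unfolding Te T_def rs_map_def
      by (simp add: scaleR_add_right sum.distrib scaleR_sum_right ev mult.commute sum_distrib_left flip: scaleR_sum_left)
  qed
  have inner_sum: "inner (\<Sum>j\<in>UNIV. u j *\<^sub>R e j) (T (e i)) = k * u i" for u i
    by (simp add: inner_sum_left key if_distrib cong: if_cong)
  show ?thesis unfolding v1_def[symmetric] T_def[symmetric] k_def[symmetric]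
  proof
    show "dual_lattice (T ` lattice_gen e) \<subseteq> (\<lambda>x. (1 / k) *\<^sub>R x) ` lattice_gen e"
    proof
      fix y assume y: "y \<in> dual_lattice (T ` lattice_gen e)"
      obtain u where u: "y = (\<Sum>i\<in>UNIV. u i *\<^sub>R e i)" using reprs[OF inj ind] by blast
      have "e i \<in> lattice_gen e" for i
        unfolding lattice_gen_def
        by (rule CollectI, rule exI[of _ "\<lambda>j. if j = i then 1 else 0"]) (simp add: if_distrib[of "\<lambda>t. t *\<^sub>R _"] cong: if_cong)
      hence "inner y (T (e i)) \<in> \<int>" for i using y unfolding dual_lattice_def by auto
      hence Z: "k * u i \<in> \<int>" for i using inner_sum u by simp
      have "y = (1 / k) *\<^sub>R (\<Sum>i\<in>UNIV. (k * u i) *\<^sub>R e i)"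
        using k0 u by (simp add: scaleR_sum_right)
      moreover have "(\<Sum>i\<in>UNIV. (k * u i) *\<^sub>R e i) \<in> lattice_gen e"
        unfolding lattice_gen_def using Z by (intro CollectI exI[of _ "\<lambda>i. k * u i"]) auto
      ultimately show "y \<in> (\<lambda>x. (1 / k) *\<^sub>R x) ` lattice_gen e" by blast
    qed
  next
    show "(\<lambda>x. (1 / k) *\<^sub>R x) ` lattice_gen e \<subseteq> dual_lattice (T ` lattice_gen e)"
    proof
      fix y assume "y \<in> (\<lambda>x. (1 / k) *\<^sub>R x) ` lattice_gen e"
      then obtain d where d: "\<forall>i. d i \<in> \<int>" and yd: "y = (1/k) *\<^sub>R (\<Sum>i\<in>UNIV. d i *\<^sub>R e i)"
        unfolding lattice_gen_def by blast
      show "y \<in> dual_lattice (T ` lattice_gen e)" unfolding dual_lattice_def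
      proof
        show "\<forall>x\<in>T ` lattice_gen e. inner y x \<in> \<int>"
        proof
          fix x assume "x \<in> T ` lattice_gen e"
          then obtain c where c: "\<forall>i. c i \<in> \<int>" and xc: "x = T (\<Sum>i\<in>UNIV. c i *\<^sub>R e i)"
            unfolding lattice_gen_def by blast
          have "inner y x = (\<Sum>i\<in>UNIV. c i * ((1/k) * (k * d i)))"
            unfolding xc Tsum yd by (simp add: inner_sum_right inner_sum)
          also have "\<dots> = (\<Sum>i\<in>UNIV. c i * d i)" using k0 by simp
          also have "\<dots> \<in> \<int>" using c d by (intro Ints_sum Ints_mult) auto
          finally show "inner y x \<in> \<int>" .
        qed
      qed
    qed
  qed
qed
end
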